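(* For every set $A \subseteq \mathbb{N}$, $$\underline{\underline{d}}(A) = d_*(A) \qquad\text{and}\qquad \overline{\overline{d}}(A) = d^*(A).$$
   Context: $\mathbb{N}=\{1,2,3,\dots\}$. For $A\subseteq\mathbb{N}$ let $A(n)=|A\cap[1,n]|$. Let $\mathcal{D}$ be the collection of all $A\subseteq\mathbb{N}$ for which the asymptotic density $d(A)=\lim_{n\to\infty}\frac{A(n)}{n}$ exists. Define $\underline{\underline{d}}(A)=\sup\{d(B);\ B\subseteq A,\ B\in\mathcal{D}\}$ and $\overline{\overline{d}}(A)=\inf\{d(C);\ C\supseteq A,\ C\in\mathcal{D}\}$. Define $d_*(A)=\sup \frac{\sum_{i=1}^{p}d(A_i)-\sum_{j=1}^{q}d(B_j)}{k}$, where the supremum is over all finite collections $A_1,\dots,A_p,B_1,\dots,B_q$ of sets in $\mathcal{D}$ and positive integers $k$ such that $k\chi_A+\sum_{j=1}^q\chi_{B_j}\ge\sum_{i=1}^p\chi_{A_i}$ pointwise on $\mathbb{N}$ ($\chi$ denotes the characteristic function). Define $d^*(A)=\inf \frac{\sum_{i=1}^{p}d(A_i)-\sum_{j=1}^{q}d(B_j)}{k}$, the infimum over all finite collections $A_1,\dots,A_p,B_1,\dots,B_q\in\mathcal{D}$ and positive integers $k$ such that $k\chi_A+\sum_{j=1}^q\chi_{B_j}\le\sum_{i=1}^p\chi_{A_i}$ pointwise. *)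

theory Defs
  imports Complex_Main
begin

text \<open>Subsets of the positive integers are modelled as sets of naturals contained in {1..}.\<close>

definition counting :: "nat set \<Rightarrow> nat \<Rightarrow> nat" where
  "counting A n = card (A \<inter> {1..n})"

definition has_density :: "nat set \<Rightarrow> real \<Rightarrow> bool" where
  "has_density A L \<longleftrightarrow> (\<lambda>n. real (counting A n) / real n) \<longlonglongrightarrow> L"

definition dens :: "nat set \<Rightarrow> real" where
  "dens A = lim (\<lambda>n. real (counting A n) / real n)"

definition Dcoll :: "nat set set" where
  "Dcoll = {A. A \<subseteq> {1..} \<and> (\<exists>L. has_density A L)}"

definition lower_dd :: "nat set \<Rightarrow> real" where
  "lower_dd A = Sup {dens B | B. B \<subseteq> A \<and> B \<in> Dcoll}"

definition upper_dd :: "nat set \<Rightarrow> real" where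
  "upper_dd A = Inf {dens C | C. A \<subseteq> C \<and> C \<in> Dcoll}"

definition chi :: "nat set \<Rightarrow> nat \<Rightarrow> real" where
  "chi A n = (if n \<in> A then 1 else 0)"

definition d_lower_star :: "nat set \<Rightarrow> real" where
  "d_lower_star A = Sup {(sum_list (map dens As) - sum_list (map dens Bs)) / real k | As Bs k.
      set As \<subseteq> Dcoll \<and> set Bs \<subseteq> Dcoll \<and> k > 0 \<and>
      (\<forall>n\<ge>1. real k * chi A n + sum_list (map (\<lambda>B. chi B n) Bs) \<ge> sum_list (map (\<lambda>C. chi C n) As))}"

definition d_upper_star :: "nat set \<Rightarrow> real" where
  "d_upper_star A = Inf {(sum_list (map dens As) - sum_list (map dens Bs)) / real k | As Bs k.
      set As \<subseteq> Dcoll \<and> set Bs \<subseteq> Dcoll \<and> k > 0 \<and>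
      (\<forall>n\<ge>1. real k * chi A n + sum_list (map (\<lambda>B. chi B n) Bs) \<le> sum_list (map (\<lambda>C. chi C n) As))}"

end

theory Submission
  imports Defs
begin

lemma counting_sum: "real (counting A n) = (\<Sum>i\<in>{1..n}. chi A i)"
proof -
  have "(\<Sum>i\<in>{1..n}. chi A i) = (\<Sum>i\<in>{1..n}. if i \<in> A then 1 else 0)"
    by (simp add: chi_def)
  also have "\<dots> = real (card ({1..n} \<inter> A))"
    by (simp add: sum.inter_restrict[symmetric])
  finally show ?thesis by (simp add: counting_def Int_commute)
qed

lemma has_dens_dens: "A \<in> Dcoll \<Longrightarrow> has_density A (dens A)"
  unfolding Dcoll_def has_density_def dens_def
  using limI by fastforce

lemma dens_eq: "has_density A L \<Longrightarrow> dens A = L"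
  unfolding has_density_def dens_def by (rule limI)

lemma sum_chi_list: "set As \<subseteq> Dcoll \<Longrightarrow>
  (\<lambda>n. (\<Sum>i\<in>{1..n}. sum_list (map (\<lambda>C. chi C i) As)) / real n) \<longlonglongrightarrow> sum_list (map dens As)"
proof (induction As)
  case Nil then show ?case by simp
next
  case (Cons a As)
  have a: "(\<lambda>n. (\<Sum>i\<in>{1..n}. chi a i) / real n) \<longlonglongrightarrow> dens a"
    using has_dens_dens[of a] Cons.prems unfolding has_density_def counting_sum by simp
  have "(\<lambda>n. (\<Sum>i\<in>{1..n}. chi a i) / real n + (\<Sum>i\<in>{1..n}. sum_list (map (\<lambda>C. chi C i) As)) / real n)
     \<longlonglongrightarrow> dens a + sum_list (map dens As)"
    using a Cons by (intro tendsto_add) auto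
  then show ?case by (simp add: sum.distrib add_divide_distrib)
qed

lemma dens_bounds: "0 \<le> real (counting A n) / real n" "real (counting A n) / real n \<le> 1"
proof -
  have "counting A n \<le> n"
    unfolding counting_def using card_mono[of "{1..n}" "A \<inter> {1..n}"] by auto
  then show "real (counting A n) / real n \<le> 1"
    by (cases "n = 0") (auto simp: divide_le_eq)
qed simp

lemma dens_range: "0 \<le> dens A \<and> dens A \<le> 1" if "A \<in> Dcoll"
proof -
  have l: "(\<lambda>n. real (counting A n) / real n) \<longlonglongrightarrow> dens A"
    using has_dens_dens[of A] that unfolding has_density_def by simp
  have "0 \<le> dens A" by (rule LIMSEQ_le_const[OF l]) (simp add: dens_bounds)
  moreover have "dens A \<le> 1" by (rule LIMSEQ_le_const2[OF l]) (simp add: dens_bounds)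
  ultimately show ?thesis by simp
qed

primrec gb :: "nat set \<Rightarrow> (nat \<Rightarrow> real) \<Rightarrow> nat \<Rightarrow> nat \<Rightarrow> nat" where
  "gb S F k 0 = 0"
| "gb S F k (Suc n) = (if Suc n \<in> S \<and> real k * (real (gb S F k n) + 1) \<le> F (Suc n)
      then Suc (gb S F k n) else gb S F k n)"

primrec runmax :: "(nat \<Rightarrow> real) \<Rightarrow> nat \<Rightarrow> real" where
  "runmax F 0 = F 0"
| "runmax F (Suc n) = max (runmax F n) (F (Suc n))"

lemma runmax_ge: "F n \<le> runmax F n"
  by (cases n) auto

lemma runmax_mono: "m \<le> n \<Longrightarrow> runmax F m \<le> runmax F n"
  by (induction n rule: dec_induct) (auto intro: order_trans)

lemma runmax_lim:
  fixes F :: "nat \<Rightarrow> real"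
  assumes lim: "(\<lambda>n. F n / real n) \<longlonglongrightarrow> m" and m0: "m \<ge> 0"
  shows "(\<lambda>n. runmax F n / real n) \<longlonglongrightarrow> m"
proof (rule order_tendstoI)
  fix a assume "a < m"
  then have "eventually (\<lambda>n. a < F n / real n) sequentially"
    using lim order_tendstoD(1) by blast
  moreover have "eventually (\<lambda>n. n \<ge> 1) sequentially" by (rule eventually_ge_at_top)
  ultimately show "eventually (\<lambda>n. a < runmax F n / real n) sequentially"
  proof eventually_elim
    case (elim n)
    then have "F n / real n \<le> runmax F n / real n"
      using runmax_ge[of F n] by (simp add: divide_right_mono)
    then show ?case using elim by linarith
  qed
next
  fix a assume am: "m < a"
  define e where "e = (a - m) / 2"
  have e0: "e > 0" and me: "m + e < a" using am by (auto simp: e_def field_simps)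
  have "eventually (\<lambda>n. F n / real n < m + e) sequentially"
    using lim order_tendstoD(2) e0 by force
  then obtain N0 where N0: "\<And>n. n \<ge> N0 \<Longrightarrow> F n / real n < m + e"
    unfolding eventually_sequentially by blast
  define N where "N = Suc N0"
  have N: "\<And>n. n \<ge> N \<Longrightarrow> F n < (m + e) * real n"
  proof -
    fix n assume "n \<ge> N"
    then have "n > 0" "n \<ge> N0" by (auto simp: N_def)
    then show "F n < (m + e) * real n" using N0[of n] by (simp add: divide_less_eq)
  qed
  have bnd: "n \<ge> N \<Longrightarrow> runmax F n \<le> max (runmax F N) ((m + e) * real n)" for n
  proof (induction n rule: dec_induct)
    case base then show ?case by simp
  next
    case (step n)
    have "(m + e) * real n \<le> (m + e) * real (Suc n)"
      using m0 e0 by (intro mult_left_mono) auto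
    moreover have "F (Suc n) \<le> (m + e) * real (Suc n)" using N[of "Suc n"] step by auto
    ultimately show ?case using step by auto
  qed
  have "(\<lambda>n. runmax F N / real n) \<longlonglongrightarrow> 0"
    by (intro tendsto_divide_0[OF tendsto_const] filterlim_at_top_imp_at_infinity filterlim_real_sequentially)
  then have "eventually (\<lambda>n. runmax F N / real n < a) sequentially"
    using am m0 order_tendstoD(2) by force
  moreover have "eventually (\<lambda>n. n \<ge> N) sequentially" by (rule eventually_ge_at_top)
  ultimately show "eventually (\<lambda>n. runmax F n / real n < a) sequentially"
  proof eventually_elim
    case (elim n)
    then have np: "real n > 0" by (auto simp: N_def)
    have "runmax F n \<le> max (runmax F N) ((m + e) * real n)" using bnd elim by auto
    then have "runmax F n / real n \<le> max (runmax F N / real n) (m + e)"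
      using np by (auto simp: divide_le_eq max_def)
    then show ?case using elim me by linarith
  qed
qed

lemma core:
  fixes f :: "nat \<Rightarrow> real" and k :: nat and S :: "nat set"
  assumes kpos: "k > 0" and fle: "\<And>n. n \<ge> 1 \<Longrightarrow> f n \<le> real k * chi S n"
    and lim: "(\<lambda>n. (\<Sum>i\<in>{1..n}. f i) / real n) \<longlonglongrightarrow> m" and m0: "m \<ge> 0"
  shows "\<exists>B. B \<subseteq> S \<inter> {1..} \<and> has_density B (m / real k)"
proof -
  define F where "F = (\<lambda>n. \<Sum>i\<in>{1..n}. f i)"
  have FSuc: "F (Suc n) = F n + f (Suc n)" for n by (simp add: F_def sum.cl_ivl_Suc)
  have F0: "F 0 = 0" by (simp add: F_def)
  define g where "g = gb S F k"
  define B where "B = {n. n \<ge> 1 \<and> n \<in> S \<and> real k * (real (g (n-1)) + 1) \<le> F n}"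
  have cnt: "real (counting B n) = real (g n)" for n
  proof (induction n)
    case 0 then show ?case by (simp add: counting_def g_def)
  next
    case (Suc n)
    then show ?case by (simp add: counting_sum sum.cl_ivl_Suc chi_def B_def g_def)
  qed
  have fk: "f n \<le> real k" if "n \<ge> 1" for n
    using fle[OF that] by (auto simp: chi_def split: if_splits)
  have D: "F n - real k * real (g n) \<le> real k" for n
  proof (induction n)
    case 0 then show ?case by (simp add: F0 g_def)
  next
    case (Suc n)
    show ?case
    proof (cases "Suc n \<in> S \<and> real k * (real (g n) + 1) \<le> F (Suc n)")
      case True
      then have "g (Suc n) = Suc (g n)" by (simp add: g_def)
      then show ?thesis using Suc fk[of "Suc n"] by (simp add: FSuc algebra_simps)
    next
      case False
      then have gs: "g (Suc n) = g n" by (simp add: g_def)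
      show ?thesis
      proof (cases "Suc n \<in> S")
        case True
        then show ?thesis using False gs by (simp add: algebra_simps)
      next
        case False
        then have "f (Suc n) \<le> 0" using fle[of "Suc n"] by (simp add: chi_def)
        then show ?thesis using Suc gs by (simp add: FSuc)
      qed
    qed
  qed
  have U: "real k * real (g n) \<le> runmax F n" for n
  proof (induction n)
    case 0 then show ?case by (simp add: g_def F0)
  next
    case (Suc n)
    show ?case
    proof (cases "Suc n \<in> S \<and> real k * (real (g n) + 1) \<le> F (Suc n)")
      case True
      then have "g (Suc n) = Suc (g n)" by (simp add: g_def)
      then show ?thesis using True by (simp add: algebra_simps le_max_iff_disj)
    next
      case False
      then have gs: "g (Suc n) = g n" by (simp add: g_def)
      then show ?thesis using Suc by simp
    qed
  qed
  have limF: "(\<lambda>n. F n / real n) \<longlonglongrightarrow> m" using lim by (simp add: F_def)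
  have l1: "(\<lambda>n. (F n / real n - real k / real n) / real k) \<longlonglongrightarrow> (m - 0) / real k"
    by (intro tendsto_intros limF tendsto_divide_0[OF tendsto_const]
        filterlim_at_top_imp_at_infinity filterlim_real_sequentially) (use kpos in simp)
  have l2: "(\<lambda>n. runmax F n / real n / real k) \<longlonglongrightarrow> m / real k"
    by (intro tendsto_intros runmax_lim[OF limF m0]) (use kpos in simp)
  have "(\<lambda>n. real (g n) / real n) \<longlonglongrightarrow> m / real k"
  proof (rule tendsto_sandwich[OF _ _ l1[simplified] l2])
    show "eventually (\<lambda>n. (F n / real n - real k / real n) / real k \<le> real (g n) / real n) sequentially"
      using eventually_ge_at_top[of 1]
    proof eventually_elim
      case (elim n)
      have "(F n / real n - real k / real n) / real k = (F n - real k) / (real k * real n)"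
        using elim kpos by (simp add: field_simps)
      also have "\<dots> \<le> (real k * real (g n)) / (real k * real n)"
        using D[of n] elim kpos by (intro divide_right_mono) auto
      also have "\<dots> = real (g n) / real n" using kpos by simp
      finally show ?case .
    qed
    show "eventually (\<lambda>n. real (g n) / real n \<le> runmax F n / real n / real k) sequentially"
      using eventually_ge_at_top[of 1]
    proof eventually_elim
      case (elim n)
      have "real (g n) / real n = (real k * real (g n)) / (real k * real n)" using kpos by simp
      also have "\<dots> \<le> runmax F n / (real k * real n)"
        using U[of n] elim kpos by (intro divide_right_mono) auto
      also have "\<dots> = runmax F n / real n / real k" by (simp add: field_simps)
      finally show ?case .
    qed
  qed
  then have "has_density B (m / real k)" unfolding has_density_def using cnt by simp
  moreover have "B \<subseteq> S \<inter> {1..}" by (auto simp: B_def)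
  ultimately show ?thesis by blast
qed

lemma empty_D: "{} \<in> Dcoll" "dens {} = 0"
proof -
  have h: "has_density {} 0" by (simp add: has_density_def counting_def)
  then show "{} \<in> Dcoll" by (auto simp: Dcoll_def)
  show "dens {} = 0" using h by (rule dens_eq)
qed

lemma compl_dens:
  assumes "B \<subseteq> {1..}" "has_density B L"
  shows "has_density ({1..} - B) (1 - L)"
proof -
  have e: "real (counting ({1..} - B) n) / real n = 1 - real (counting B n) / real n" if "n \<ge> 1" for n
  proof -
    have "real (counting ({1..} - B) n) = (\<Sum>i\<in>{1..n}. 1 - chi B i)"
      unfolding counting_sum by (intro sum.cong) (auto simp: chi_def)
    also have "\<dots> = real n - real (counting B n)" by (simp add: sum_subtractf counting_sum)
    finally show ?thesis using that by (simp add: field_simps)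
  qed
  have "(\<lambda>n. 1 - real (counting B n) / real n) \<longlonglongrightarrow> 1 - L"
    using assms(2) unfolding has_density_def by (intro tendsto_intros)
  then show ?thesis unfolding has_density_def
  proof (rule Lim_transform_eventually)
    show "\<forall>\<^sub>F n in sequentially. 1 - real (counting B n) / real n = real (counting ({1..} - B) n) / real n"
      using eventually_ge_at_top[of 1] by eventually_elim (use e in auto)
  qed
qed

lemma univ_D: "{1..} \<in> Dcoll" "dens {1..} = 1"
proof -
  have "has_density ({1..} - {}) (1 - 0)"
    by (rule compl_dens) (auto simp: has_density_def counting_def)
  then have h: "has_density {1..} 1" by simp
  then show "{1..} \<in> Dcoll" by (auto simp: Dcoll_def)
  show "dens {1..} = 1" using h by (rule dens_eq)
qed

lemma list_lim:
  assumes "set As \<subseteq> Dcoll" "set Bs \<subseteq> Dcoll"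
  shows "(\<lambda>n. (\<Sum>i\<in>{1..n}. sum_list (map (\<lambda>C. chi C i) As) - sum_list (map (\<lambda>C. chi C i) Bs)) / real n)
     \<longlonglongrightarrow> sum_list (map dens As) - sum_list (map dens Bs)"
  using tendsto_diff[OF sum_chi_list[OF assms(1)] sum_chi_list[OF assms(2)]]
  by (simp add: sum_subtractf diff_divide_distrib)

theorem theorem3p2:
  fixes A :: "nat set"
  assumes "A \<subseteq> {1..}"
  shows "lower_dd A = d_lower_star A \<and> upper_dd A = d_upper_star A"
proof
  define Ls where "Ls = {dens B | B. B \<subseteq> A \<and> B \<in> Dcoll}"
  define Ds where "Ds = {(sum_list (map dens As) - sum_list (map dens Bs)) / real k | As Bs k.
      set As \<subseteq> Dcoll \<and> set Bs \<subseteq> Dcoll \<and> k > 0 \<and>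
      (\<forall>n\<ge>1. real k * chi A n + sum_list (map (\<lambda>B. chi B n) Bs) \<ge> sum_list (map (\<lambda>C. chi C n) As))}"
  have L0: "0 \<in> Ls" unfolding Ls_def using empty_D by force
  have Lbdd: "bdd_above Ls" unfolding Ls_def bdd_above_def using dens_range by blast
  have sub: "Ls \<subseteq> Ds"
  proof
    fix x assume "x \<in> Ls"
    then obtain B where B: "x = dens B" "B \<subseteq> A" "B \<in> Dcoll" unfolding Ls_def by blast
    have "x = (sum_list (map dens [B]) - sum_list (map dens [])) / real (1::nat)" using B by simp
    moreover have "\<forall>n\<ge>1. real (1::nat) * chi A n + sum_list (map (\<lambda>B. chi B n) []) \<ge> sum_list (map (\<lambda>C. chi C n) [B])"
      using B by (auto simp: chi_def)
    ultimately show "x \<in> Ds" unfolding Ds_def mem_Collect_eq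
      by (intro exI[of _ "[B]"] exI[of _ "[]"] exI[of _ "1::nat"] conjI) (use B in auto)
  qed
  have dle: "x \<le> Sup Ls" if "x \<in> Ds" for x
  proof -
    obtain As Bs k where x: "x = (sum_list (map dens As) - sum_list (map dens Bs)) / real k"
      and As: "set As \<subseteq> Dcoll" and Bs: "set Bs \<subseteq> Dcoll" and k: "k > 0"
      and cond: "\<forall>n\<ge>1. real k * chi A n + sum_list (map (\<lambda>B. chi B n) Bs) \<ge> sum_list (map (\<lambda>C. chi C n) As)"
      using \<open>x \<in> Ds\<close> unfolding Ds_def by blast
    define m where "m = sum_list (map dens As) - sum_list (map dens Bs)"
    show ?thesis
    proof (cases "m < 0")
      case True
      then have "x \<le> 0" using k by (simp add: x m_def[symmetric] divide_nonpos_pos)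
      also have "0 \<le> Sup Ls" using L0 Lbdd by (rule cSup_upper)
      finally show ?thesis .
    next
      case False
      obtain B where B: "B \<subseteq> A \<inter> {1..}" "has_density B (m / real k)"
        using core[of k "\<lambda>n. sum_list (map (\<lambda>C. chi C n) As) - sum_list (map (\<lambda>C. chi C n) Bs)" A m]
          k cond list_lim[OF As Bs] False by (force simp: m_def)
      have "B \<in> Dcoll" using B unfolding Dcoll_def by blast
      moreover have "x = dens B" using dens_eq[OF B(2)] by (simp add: x m_def)
      ultimately have "x \<in> Ls" unfolding Ls_def using B by blast
      then show ?thesis using Lbdd by (rule cSup_upper)
    qed
  qed
  have Dbdd: "bdd_above Ds" using dle by (auto simp: bdd_above_def)
  have "Sup Ls \<le> Sup Ds" using L0 Dbdd sub by (intro cSup_subset_mono) auto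
  moreover have "Sup Ds \<le> Sup Ls" using L0 sub dle by (intro cSup_least) auto
  ultimately show "lower_dd A = d_lower_star A"
    unfolding lower_dd_def d_lower_star_def Ls_def[symmetric] Ds_def[symmetric] by simp
next
  define Us where "Us = {dens C | C. A \<subseteq> C \<and> C \<in> Dcoll}"
  define Es where "Es = {(sum_list (map dens As) - sum_list (map dens Bs)) / real k | As Bs k.
      set As \<subseteq> Dcoll \<and> set Bs \<subseteq> Dcoll \<and> k > 0 \<and>
      (\<forall>n\<ge>1. real k * chi A n + sum_list (map (\<lambda>B. chi B n) Bs) \<le> sum_list (map (\<lambda>C. chi C n) As))}"
  have U1: "1 \<in> Us" unfolding Us_def using univ_D assms by force
  have Ubdd: "bdd_below Us" unfolding Us_def bdd_below_def using dens_range by blast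
  have sub: "Us \<subseteq> Es"
  proof
    fix x assume "x \<in> Us"
    then obtain C where C: "x = dens C" "A \<subseteq> C" "C \<in> Dcoll" unfolding Us_def by blast
    have "x = (sum_list (map dens [C]) - sum_list (map dens [])) / real (1::nat)" using C by simp
    moreover have "\<forall>n\<ge>1. real (1::nat) * chi A n + sum_list (map (\<lambda>B. chi B n) []) \<le> sum_list (map (\<lambda>C. chi C n) [C])"
      using C by (auto simp: chi_def)
    ultimately show "x \<in> Es" unfolding Es_def mem_Collect_eq
      by (intro exI[of _ "[C]"] exI[of _ "[]"] exI[of _ "1::nat"] conjI) (use C in auto)
  qed
  have dge: "Inf Us \<le> x" if "x \<in> Es" for x
  proof -
    obtain As Bs k where x: "x = (sum_list (map dens As) - sum_list (map dens Bs)) / real k"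
      and As: "set As \<subseteq> Dcoll" and Bs: "set Bs \<subseteq> Dcoll" and k: "k > 0"
      and cond: "\<forall>n\<ge>1. real k * chi A n + sum_list (map (\<lambda>B. chi B n) Bs) \<le> sum_list (map (\<lambda>C. chi C n) As)"
      using \<open>x \<in> Es\<close> unfolding Es_def by blast
    define m where "m = sum_list (map dens As) - sum_list (map dens Bs)"
    define h where "h = (\<lambda>n. sum_list (map (\<lambda>C. chi C n) As) - sum_list (map (\<lambda>C. chi C n) Bs))"
    have hlim: "(\<lambda>n. (\<Sum>i\<in>{1..n}. h i) / real n) \<longlonglongrightarrow> m"
      using list_lim[OF As Bs] by (simp add: h_def m_def)
    show ?thesis
    proof (cases "real k - m < 0")
      case True
      have "Inf Us \<le> 1" using U1 Ubdd by (rule cInf_lower)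
      also have "1 \<le> x" using True k by (simp add: x m_def[symmetric] field_simps)
      finally show ?thesis .
    next
      case False
      define f where "f = (\<lambda>n. real k - h n)"
      have fle: "f n \<le> real k * chi ({1..} - A) n" if "n \<ge> 1" for n
      proof -
        have "real k * chi A n + sum_list (map (\<lambda>B. chi B n) Bs) \<le> sum_list (map (\<lambda>C. chi C n) As)"
          using cond that by blast
        then have "real k * chi A n \<le> h n" unfolding h_def by linarith
        then show ?thesis using that by (auto simp: f_def chi_def)
      qed
      have "(\<lambda>n. real k - (\<Sum>i\<in>{1..n}. h i) / real n) \<longlonglongrightarrow> real k - m"
        using hlim by (intro tendsto_intros)
      then have flim: "(\<lambda>n. (\<Sum>i\<in>{1..n}. f i) / real n) \<longlonglongrightarrow> real k - m"
      proof (rule Lim_transform_eventually)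
        show "\<forall>\<^sub>F n in sequentially. real k - (\<Sum>i\<in>{1..n}. h i) / real n = (\<Sum>i\<in>{1..n}. f i) / real n"
          using eventually_ge_at_top[of 1]
          by eventually_elim (auto simp: f_def sum_subtractf field_simps)
      qed
      obtain B where B: "B \<subseteq> ({1..} - A) \<inter> {1..}" "has_density B ((real k - m) / real k)"
        using core[OF k fle flim] False by force
      have "has_density ({1..} - B) (1 - (real k - m) / real k)"
        using B by (intro compl_dens) auto
      moreover have "1 - (real k - m) / real k = x" using k by (simp add: x m_def[symmetric] field_simps)
      ultimately have hC: "has_density ({1..} - B) x" by simp
      have "x \<in> Us" unfolding Us_def Dcoll_def using dens_eq[OF hC] hC B assms by blast
      then show ?thesis using Ubdd by (rule cInf_lower)
    qed
  qed
  have Ebdd: "bdd_below Es" using dge by (auto simp: bdd_below_def)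
  have "Inf Es \<le> Inf Us" using U1 Ebdd sub by (intro cInf_superset_mono) auto
  moreover have "Inf Us \<le> Inf Es" using U1 sub dge by (intro cInf_greatest) auto
  ultimately show "upper_dd A = d_upper_star A"
    unfolding upper_dd_def d_upper_star_def Us_def[symmetric] Es_def[symmetric] by simp
qed

end
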